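(* Let $H=(V,\mathcal E)$ be a finite hypergraph and let $\mathcal L=\{L_v\}_{v\in V}$ be a family of sets of positive integers such that $|L_v|\ge\min(\deg_H(v)+1,\,s(H))$ for every $v\in V$. Then $H$ admits a unique-maximum coloring from $\mathcal L$.
   Context: A hypergraph $H=(V,\mathcal E)$ has finite vertex set and a set $\mathcal E$ of nonempty subsets of $V$. $\deg_H(v)$ is the number of hyperedges containing $v$. $s(H)$ is the minimum positive integer $s$ with $|\mathcal E|\le s(s-1)/2$. A coloring $C\colon V\to\mathbb Z_{>0}$ is unique-maximum if in every hyperedge the maximum color is attained by exactly one vertex; $H$ admits such a coloring from $\mathcal L$ if moreover $C(v)\in L_v$ for all $v$. *)

theory Defs
  imports Main
begin

definition hypergraph :: "'a set \<Rightarrow> 'a set set \<Rightarrow> bool" where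
  "hypergraph V E \<longleftrightarrow> finite V \<and> (\<forall>e\<in>E. e \<noteq> {} \<and> e \<subseteq> V)"

definition hdeg :: "'a set set \<Rightarrow> 'a \<Rightarrow> nat" where
  "hdeg E v = card {e\<in>E. v \<in> e}"

definition s_param :: "'a set set \<Rightarrow> nat" where
  "s_param E = (LEAST s::nat. 0 < s \<and> 2 * card E \<le> s * (s - 1))"

definition unique_max_coloring :: "'a set set \<Rightarrow> ('a \<Rightarrow> nat) \<Rightarrow> bool" where
  "unique_max_coloring E C \<longleftrightarrow>
     (\<forall>e\<in>E. \<exists>v\<in>e. \<forall>w\<in>e. w \<noteq> v \<longrightarrow> C w < C v)"

end

theory Submission
  imports Defs
begin

definition okL :: "'a set \<Rightarrow> 'a set set \<Rightarrow> ('a \<Rightarrow> nat set) \<Rightarrow> bool" where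
  "okL V E L \<longleftrightarrow> (\<forall>v\<in>V. infinite (L v) \<or> min (hdeg E v + 1) (s_param E) \<le> card (L v))"

lemma sp_spec: "0 < s_param E \<and> 2 * card E \<le> s_param E * (s_param E - 1)"
proof -
  have "0 < 2*card E + 1 \<and> 2 * card E \<le> (2*card E + 1) * (2*card E + 1 - 1)" by simp
  then show ?thesis unfolding s_param_def by (rule LeastI)
qed

lemma sp_le: "0 < s \<Longrightarrow> 2 * card E \<le> s * (s - 1) \<Longrightarrow> s_param E \<le> s"
  unfolding s_param_def by (rule Least_le) simp

lemma sp_mono: assumes "card E' \<le> card E" shows "s_param E' \<le> s_param E"
proof (rule sp_le)
  show "0 < s_param E" using sp_spec by blast
  have "2 * card E' \<le> 2 * card E" using assms by simp
  also have "\<dots> \<le> s_param E * (s_param E - 1)" using sp_spec by blast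
  finally show "2 * card E' \<le> s_param E * (s_param E - 1)" .
qed

lemma max_eq: "finite A \<Longrightarrow> w \<in> A \<Longrightarrow> \<forall>w'\<in>A. w' \<noteq> w \<longrightarrow> f w' < (f w::nat) \<Longrightarrow> Max (f ` A) = f w"
  by (intro Max_eqI) (auto intro: less_imp_le)

lemma finE_of: "hypergraph V E \<Longrightarrow> finite E"
  unfolding hypergraph_def by (meson PowI finite_Pow_iff finite_subset subsetI)

lemma case1:
  assumes hg: "hypergraph V E" and ok: "okL V E L" and v: "v \<in> V"
    and big: "infinite (L v) \<or> hdeg E v + 1 \<le> card (L v)"
    and IH: "\<And>E' L'. hypergraph (V - {v}) E' \<Longrightarrow> okL (V - {v}) E' L' \<Longrightarrow>
               \<exists>C. (\<forall>u\<in>V-{v}. C u \<in> L' u) \<and> unique_max_coloring E' C"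
  shows "\<exists>C. (\<forall>u\<in>V. C u \<in> L u) \<and> unique_max_coloring E C"
proof -
  have finV: "finite V" and Esub: "\<forall>e\<in>E. e \<noteq> {} \<and> e \<subseteq> V" using hg unfolding hypergraph_def by auto
  have finE: "finite E" using finE_of[OF hg] .
  define E' where "E' = (\<lambda>e. e - {v}) ` {e\<in>E. e \<noteq> {v}}"
  have hg': "hypergraph (V - {v}) E'" unfolding hypergraph_def E'_def using finV Esub by auto
  have "card E' \<le> card {e\<in>E. e\<noteq>{v}}" unfolding E'_def by (rule card_image_le) (use finE in auto)
  also have "\<dots> \<le> card E" by (rule card_mono) (use finE in auto)
  finally have cardE': "card E' \<le> card E" .
  have deg': "hdeg E' u \<le> hdeg E u" if "u \<in> V - {v}" for u
  proof -
    have "{e\<in>E'. u \<in> e} = (\<lambda>e. e - {v}) ` {e\<in>E. e \<noteq> {v} \<and> u \<in> e}" unfolding E'_def using that by auto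
    hence "hdeg E' u = card ((\<lambda>e. e - {v}) ` {e\<in>E. e \<noteq> {v} \<and> u \<in> e})" unfolding hdeg_def by simp
    also have "\<dots> \<le> card {e\<in>E. e \<noteq> {v} \<and> u \<in> e}" by (rule card_image_le) (use finE in auto)
    also have "\<dots> \<le> card {e\<in>E. u \<in> e}" by (rule card_mono) (use finE in auto)
    finally show ?thesis unfolding hdeg_def .
  qed
  have ok': "okL (V - {v}) E' L"
    unfolding okL_def
  proof
    fix u assume u: "u \<in> V - {v}"
    have "min (hdeg E' u + 1) (s_param E') \<le> min (hdeg E u + 1) (s_param E)"
      using deg'[OF u] sp_mono[OF cardE'] by (simp add: min_def)
    thus "infinite (L u) \<or> min (hdeg E' u + 1) (s_param E') \<le> card (L u)" using ok u unfolding okL_def by auto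
  qed
  obtain C' where C'L: "\<forall>u\<in>V-{v}. C' u \<in> L u" and C'um: "unique_max_coloring E' C'"
    using IH[OF hg' ok'] by blast
  define F where "F = (\<lambda>e. Max (C' ` (e - {v}))) ` {e\<in>E. v \<in> e}"
  have cF: "card F \<le> hdeg E v" unfolding F_def hdeg_def by (rule card_image_le) (use finE in auto)
  have finF: "finite F" unfolding F_def using finE by auto
  have "\<exists>x\<in>L v. x \<notin> F"
  proof (cases "finite (L v)")
    case True
    then have "card F < card (L v)" using big cF by auto
    hence "\<not> L v \<subseteq> F" using card_mono[OF finF] by (meson not_le)
    thus ?thesis by auto
  next
    case False
    then have "\<not> L v \<subseteq> F" using finF finite_subset by blast
    thus ?thesis by auto
  qed
  then obtain x where x: "x \<in> L v" "x \<notin> F" by blast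
  define C where "C = C'(v := x)"
  have "\<forall>u\<in>V. C u \<in> L u" using C'L x unfolding C_def by auto
  moreover have "unique_max_coloring E C"
    unfolding unique_max_coloring_def
  proof
    fix e assume e: "e \<in> E"
    show "\<exists>w\<in>e. \<forall>w'\<in>e. w' \<noteq> w \<longrightarrow> C w' < C w"
    proof (cases "v \<in> e")
      case False
      then have "e \<in> E'" unfolding E'_def using e by force
      then obtain w where w: "w \<in> e" "\<forall>w'\<in>e. w' \<noteq> w \<longrightarrow> C' w' < C' w"
        using C'um unfolding unique_max_coloring_def by blast
      moreover have "\<forall>y\<in>e. C y = C' y" using False unfolding C_def by auto
      ultimately show ?thesis by metis
    next
      case True
      show ?thesis
      proof (cases "e = {v}")
        case True thus ?thesis by auto
      next
        case False
        have "e - {v} \<in> E'" unfolding E'_def using e False by auto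
        then obtain w where w: "w \<in> e - {v}" "\<forall>w'\<in>e-{v}. w' \<noteq> w \<longrightarrow> C' w' < C' w"
          using C'um unfolding unique_max_coloring_def by blast
        have fe: "finite (e - {v})" using Esub e finV finite_subset by blast
        have "Max (C' ` (e - {v})) = C' w" using max_eq[OF fe w(1) w(2)] .
        moreover have "Max (C' ` (e - {v})) \<in> F" unfolding F_def using e \<open>v\<in>e\<close> by auto
        ultimately have xne: "x \<noteq> C' w" using x by auto
        show ?thesis
        proof (cases "x < C' w")
          case True
          show ?thesis
          proof (rule bexI[of _ w])
            show "w \<in> e" using w by auto
            show "\<forall>w'\<in>e. w' \<noteq> w \<longrightarrow> C w' < C w" using w True unfolding C_def by auto
          qed
        next
          case False
          with xne have lt: "C' w < x" by auto
          show ?thesis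
          proof (rule bexI[of _ v])
            show "v \<in> e" by fact
            show "\<forall>w'\<in>e. w' \<noteq> v \<longrightarrow> C w' < C v"
            proof (intro ballI impI)
              fix w' assume "w' \<in> e" "w' \<noteq> v"
              then have "C' w' \<le> C' w" using w by (cases "w' = w") (auto intro: less_imp_le)
              thus "C w' < C v" using lt \<open>w' \<noteq> v\<close> unfolding C_def by auto
            qed
          qed
        qed
      qed
    qed
  qed
  ultimately show ?thesis by blast
qed

lemma arith1: "a \<le> h - 1 \<Longrightarrow> 1 \<le> h \<Longrightarrow> b \<le> s - 1 \<Longrightarrow> min (h+1) s \<le> x \<Longrightarrow> x - 1 \<le> y \<Longrightarrow> min (a+1) b \<le> (y::nat)"
  by (auto simp: min_def split: if_splits)
lemma arith2: "a \<le> h \<Longrightarrow> b \<le> s \<Longrightarrow> min (h+1) s \<le> (x::nat) \<Longrightarrow> min (a+1) b \<le> x"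
  by (auto simp: min_def split: if_splits)

lemma case2:
  assumes hg: "hypergraph V E" and ok: "okL V E L" and v: "v \<in> V"
    and cv: "c \<in> L v" and cmax: "\<forall>u\<in>V. \<forall>y\<in>L u. y \<le> c"
    and fin: "\<forall>u\<in>V. finite (L u)" and small: "card (L v) \<le> hdeg E v"
    and IH: "\<And>E' L'. hypergraph (V - {v}) E' \<Longrightarrow> okL (V - {v}) E' L' \<Longrightarrow>
               \<exists>C. (\<forall>u\<in>V-{v}. C u \<in> L' u) \<and> unique_max_coloring E' C"
  shows "\<exists>C. (\<forall>u\<in>V. C u \<in> L u) \<and> unique_max_coloring E C"
proof -
  have finV: "finite V" and Esub: "\<forall>e\<in>E. e \<noteq> {} \<and> e \<subseteq> V" using hg unfolding hypergraph_def by auto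
  have finE: "finite E" using finE_of[OF hg] .
  define E'' where "E'' = {e\<in>E. v \<notin> e}"
  define N where "N = \<Union>{e\<in>E. v \<in> e}"
  define L'' where "L'' = (\<lambda>u. if u \<in> N then L u - {c} else L u)"
  have hg'': "hypergraph (V - {v}) E''" unfolding hypergraph_def E''_def using finV Esub by auto
  define s where "s = s_param E"
  have sE: "0 < s" "2 * card E \<le> s * (s - 1)" using sp_spec unfolding s_def by auto
  have "min (hdeg E v + 1) s \<le> card (L v)" using ok v fin unfolding okL_def s_def by auto
  hence sle: "s \<le> hdeg E v" using small by (simp add: min_def split: if_splits)
  have "E \<noteq> {}" using sle sE(1) unfolding hdeg_def by auto
  hence E1: "card E \<ge> 1" using finE by (simp add: Suc_le_eq card_gt_0_iff)
  have s2: "s \<ge> 2"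
  proof (rule ccontr)
    assume "\<not> s \<ge> 2" then have "s = 1" using sE(1) by auto
    then show False using sE(2) E1 by simp
  qed
  have cardE'': "card E'' = card E - hdeg E v"
  proof -
    have "E'' = E - {e\<in>E. v \<in> e}" unfolding E''_def by auto
    thus ?thesis unfolding hdeg_def using finE by (simp add: card_Diff_subset)
  qed
  have dleE: "hdeg E v \<le> card E" unfolding hdeg_def using finE by (intro card_mono) auto
  have s'': "s_param E'' \<le> s - 1"
  proof (rule sp_le)
    show "0 < s - 1" using s2 by simp
    obtain t where t: "s = t + 2" using s2 by (metis add.commute le_add_diff_inverse)
    have id: "(t+2)*(t+1) = (t+1)*t + 2*t + 2" by (simp add: algebra_simps)
    have a: "2 * card E \<le> (t+1)*t + 2*t + 2" using sE(2) unfolding t id[symmetric] by simp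
    have b: "t + 2 \<le> hdeg E v" using sle unfolding t .
    have "2 * card E'' \<le> (t+1)*t" unfolding cardE'' using a b dleE by linarith
    thus "2 * card E'' \<le> (s - 1) * (s - 1 - 1)" unfolding t by (simp add: mult.commute)
  qed
  have ok'': "okL (V - {v}) E'' L''"
    unfolding okL_def
  proof
    fix u assume u: "u \<in> V - {v}"
    have fu: "finite (L u)" using fin u by auto
    have ou: "min (hdeg E u + 1) s \<le> card (L u)" using ok u fu unfolding okL_def s_def by auto
    show "infinite (L'' u) \<or> min (hdeg E'' u + 1) (s_param E'') \<le> card (L'' u)"
    proof (cases "u \<in> N")
      case True
      then obtain e0 where e0: "e0 \<in> E" "v \<in> e0" "u \<in> e0" unfolding N_def by auto
      have "{e\<in>E''. u \<in> e} \<subseteq> {e\<in>E. u \<in> e} - {e0}" unfolding E''_def using e0 by auto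
      hence "hdeg E'' u \<le> card ({e\<in>E. u \<in> e} - {e0})" unfolding hdeg_def
        by (rule card_mono[rotated]) (use finE in auto)
      also have "\<dots> = hdeg E u - 1" unfolding hdeg_def using e0 finE by (simp add: card_Diff_singleton)
      finally have d1: "hdeg E'' u \<le> hdeg E u - 1" .
      have "0 < card {e\<in>E. u \<in> e}" using e0 finE by (subst card_gt_0_iff) auto
      hence d0: "hdeg E u \<ge> 1" unfolding hdeg_def by simp
      have cL: "card (L'' u) \<ge> card (L u) - 1" unfolding L''_def using True fu
        by (simp add: card_Diff_singleton_if)
      have "min (hdeg E'' u + 1) (s_param E'') \<le> card (L'' u)"
        by (rule arith1[OF d1 d0 s'' ou cL])
      thus ?thesis by blast
    next
      case False
      have "hdeg E'' u \<le> hdeg E u" unfolding hdeg_def E''_def by (rule card_mono) (use finE in auto)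
      moreover have "s_param E'' \<le> s" using s'' by simp
      ultimately have "min (hdeg E'' u + 1) (s_param E'') \<le> card (L u)"
        using ou by (rule arith2)
      hence "min (hdeg E'' u + 1) (s_param E'') \<le> card (L'' u)"
        using False unfolding L''_def by simp
      thus ?thesis by blast
    qed
  qed
  obtain C'' where C''L: "\<forall>u\<in>V-{v}. C'' u \<in> L'' u" and C''um: "unique_max_coloring E'' C''"
    using IH[OF hg'' ok''] by blast
  define C where "C = C''(v := c)"
  have "\<forall>u\<in>V. C u \<in> L u" using C''L cv unfolding C_def L''_def by (auto split: if_splits)
  moreover have "unique_max_coloring E C"
    unfolding unique_max_coloring_def
  proof
    fix e assume e: "e \<in> E"
    show "\<exists>w\<in>e. \<forall>w'\<in>e. w' \<noteq> w \<longrightarrow> C w' < C w"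
    proof (cases "v \<in> e")
      case False
      then have "e \<in> E''" unfolding E''_def using e by auto
      then obtain w where w: "w \<in> e" "\<forall>w'\<in>e. w' \<noteq> w \<longrightarrow> C'' w' < C'' w"
        using C''um unfolding unique_max_coloring_def by blast
      moreover have "\<forall>y\<in>e. C y = C'' y" using False unfolding C_def by auto
      ultimately show ?thesis by metis
    next
      case True
      show ?thesis
      proof (rule bexI[of _ v])
        show "v \<in> e" by fact
        show "\<forall>w'\<in>e. w' \<noteq> v \<longrightarrow> C w' < C v"
        proof (intro ballI impI)
          fix w' assume w': "w' \<in> e" "w' \<noteq> v"
          have wV: "w' \<in> V - {v}" using w' Esub e by auto
          have wN: "w' \<in> N" unfolding N_def using w' e True by auto
          have "C'' w' \<in> L'' w'" using C''L wV by blast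
          moreover have "L'' w' = L w' - {c}" using wN unfolding L''_def by simp
          ultimately have "C'' w' \<in> L w' - {c}" by simp
          moreover have "\<forall>y\<in>L w'. y \<le> c" using cmax wV by auto
          ultimately have "C'' w' < c" by fastforce
          thus "C w' < C v" using w' unfolding C_def by auto
        qed
      qed
    qed
  qed
  ultimately show ?thesis by blast
qed

lemma main: "finite V \<Longrightarrow> hypergraph V E \<Longrightarrow> okL V E L \<Longrightarrow>
   \<exists>C. (\<forall>u\<in>V. C u \<in> L u) \<and> unique_max_coloring E C"
proof (induction "card V" arbitrary: V E L rule: less_induct)
  case less
  show ?case
  proof (cases "V = {}")
    case True
    then have "E = {}" using less.prems(2) unfolding hypergraph_def by auto
    thus ?thesis using True unfolding unique_max_coloring_def by auto
  next
    case nonempty: False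
    have IH: "\<exists>C. (\<forall>u\<in>V-{v}. C u \<in> L' u) \<and> unique_max_coloring E' C"
      if "v \<in> V" "hypergraph (V - {v}) E'" "okL (V - {v}) E' L'" for v E' L'
      using less.hyps[OF card_Diff1_less[OF less.prems(1) that(1)] finite_Diff[OF less.prems(1)] that(2) that(3)] .
    show ?thesis
    proof (cases "\<exists>v\<in>V. infinite (L v)")
      case True
      then obtain v where v: "v\<in>V" "infinite (L v)" by blast
      show ?thesis by (rule case1[OF less.prems(2,3) v(1) _ IH[OF v(1)]]) (simp add: v(2))
    next
      case False
      hence fin: "\<forall>u\<in>V. finite (L u)" by blast
      define U where "U = \<Union> (L ` V)"
      have finU: "finite U" unfolding U_def using fin less.prems(1) by auto
      obtain v0 where v0: "v0 \<in> V" using nonempty by blast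
      have "0 < s_param E" using sp_spec by blast
      hence p: "0 < min (hdeg E v0 + 1) (s_param E)" by simp
      have "min (hdeg E v0 + 1) (s_param E) \<le> card (L v0)" using less.prems(3) v0 fin unfolding okL_def by blast
      with p have "0 < card (L v0)" by linarith
      hence "L v0 \<noteq> {}" by auto
      hence Une: "U \<noteq> {}" unfolding U_def using v0 by auto
      define c where "c = Max U"
      have "c \<in> U" unfolding c_def using finU Une by simp
      then obtain v where v: "v \<in> V" "c \<in> L v" unfolding U_def by auto
      have cmax: "\<forall>u\<in>V. \<forall>y\<in>L u. y \<le> c"
      proof (intro ballI)
        fix u y assume "u \<in> V" "y \<in> L u"
        then have "y \<in> U" unfolding U_def by auto
        then show "y \<le> c" unfolding c_def using finU by simp
      qed
      show ?thesis
      proof (cases "hdeg E v + 1 \<le> card (L v)")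
        case True
        then show ?thesis by (intro case1[OF less.prems(2,3) v(1) _ IH[OF v(1)]]) simp
      next
        case False
        then show ?thesis by (intro case2[OF less.prems(2,3) v(1) v(2) cmax fin _ IH[OF v(1)]]) simp
      qed
    qed
  qed
qed

theorem theorem5p3:
  fixes V :: "'a set" and E :: "'a set set" and L :: "'a \<Rightarrow> nat set"
  assumes "hypergraph V E"
    and "\<forall>v\<in>V. L v \<subseteq> {n. 0 < n}"
    and "\<forall>v\<in>V. infinite (L v) \<or> min (hdeg E v + 1) (s_param E) \<le> card (L v)"
  shows "\<exists>C :: 'a \<Rightarrow> nat. (\<forall>v\<in>V. C v \<in> L v) \<and> unique_max_coloring E C"
proof -
  have fin: "finite V" using assms(1) unfolding hypergraph_def by simp
  have ok: "okL V E L" unfolding okL_def using assms(3) .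
  show ?thesis using main[OF fin assms(1) ok] by blast
qed

end
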